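(* Let $P\in(1,+\infty)$ and let $\mathcal{A}\subset\mathbb{N}^k$ be finite. Then $$\left(\sum_{\mathbf{a}\in\mathcal{A}}\frac{W_{k+1}^P(\mathbf{a})}{a_1\cdots a_k}\right)^{1/P}\left(\frac{1}{(\log2)^k}\sum_{\mathbf{a}\in\mathcal{A}}\frac{L^{(k+1)}(\mathbf{a})}{a_1\cdots a_k}\right)^{1-1/P}\ge\sum_{\mathbf{a}\in\mathcal{A}}\frac{\tau_{k+1}(\mathbf{a})}{a_1\cdots a_k}.$$
   Context: For $\mathbf{a}=(a_1,\dots,a_k)\in\mathbb{N}^k$: $\tau_{k+1}(\mathbf{a})=|\{(d_1,\dots,d_k)\in\mathbb{N}^k: d_1\cdots d_i\mid a_1\cdots a_i\ (1\le i\le k)\}|$; $L^{(k+1)}(\mathbf{a})$ is the $k$-dimensional Lebesgue measure of $\bigcup[\log(d_1/2),\log d_1)\times\cdots\times[\log(d_k/2),\log d_k)$ over all such $(d_1,\dots,d_k)$; and $$W_{k+1}^P(\mathbf{a})=\sum_{\substack{d_1\cdots d_i\mid a_1\cdots a_i\\1\le i\le k}}\left(\sum_{\substack{d_1'\cdots d_i'\mid a_1\cdots a_i\\|\log(d_i'/d_i)|<\log2\\1\le i\le k}}1\right)^{P-1},$$ where all $d_i,d_i'$ are positive integers. *)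

theory Defs
  imports "HOL-Analysis.Analysis" "HOL-Probability.Probability"
begin

text \<open>Vectors in N^k are represented as lists of positive naturals of length k
  (paper index i = list index i-1).\<close>

definition pos_vecs :: "nat \<Rightarrow> nat list set" where
  "pos_vecs k = {a. length a = k \<and> (\<forall>x\<in>set a. 0 < x)}"

definition div_tuples :: "nat list \<Rightarrow> nat list set" where
  "div_tuples a = {d. d \<in> pos_vecs (length a) \<and>
      (\<forall>i<length a. prod_list (take (Suc i) d) dvd prod_list (take (Suc i) a))}"

definition tau :: "nat list \<Rightarrow> nat" where
  "tau a = card (div_tuples a)"

definition box :: "nat list \<Rightarrow> (nat \<Rightarrow> real) set" where
  "box d = PiE {..<length d} (\<lambda>i. {ln (real (d ! i) / 2) ..< ln (real (d ! i))})"

definition Lmeas :: "nat list \<Rightarrow> real" where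
  "Lmeas a = measure (PiM {..<length a} (\<lambda>_. lborel)) (\<Union>d\<in>div_tuples a. box d)"

definition Wfun :: "real \<Rightarrow> nat list \<Rightarrow> real" where
  "Wfun P a = (\<Sum>d\<in>div_tuples a.
      real (card {d'\<in>div_tuples a. \<forall>i<length a.
         \<bar>ln (real (d' ! i) / real (d ! i))\<bar> < ln 2}) powr (P - 1))"

end

theory Submission
  imports Defs
begin
lemma holder_sum:
  fixes x y :: "'a \<Rightarrow> real"
  assumes "finite S" "\<And>i. i\<in>S \<Longrightarrow> 0 \<le> x i" "\<And>i. i\<in>S \<Longrightarrow> 0 \<le> y i" "0 < t" "t < 1"
  shows "(\<Sum>i\<in>S. x i powr t * y i powr (1-t)) \<le> (\<Sum>i\<in>S. x i) powr t * (\<Sum>i\<in>S. y i) powr (1-t)"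
proof -
  define X where "X = (\<Sum>i\<in>S. x i)"
  define Y where "Y = (\<Sum>i\<in>S. y i)"
  have X0: "X \<ge> 0" "Y \<ge> 0" unfolding X_def Y_def using assms by (auto intro: sum_nonneg)
  show ?thesis
  proof (cases "X = 0 \<or> Y = 0")
    case True
    then have "(\<forall>i\<in>S. x i = 0) \<or> (\<forall>i\<in>S. y i = 0)"
      unfolding X_def Y_def using assms sum_nonneg_eq_0_iff by blast
    hence "(\<Sum>i\<in>S. x i powr t * y i powr (1-t)) = 0" by auto
    thus ?thesis using X0 unfolding X_def[symmetric] Y_def[symmetric] by simp
  next
    case False
    hence XY: "X > 0" "Y > 0" using X0 by auto
    have "x i powr t * y i powr (1-t) \<le> X powr t * Y powr (1-t) * (t * (x i / X) + (1-t) * (y i / Y))"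
      if i: "i \<in> S" for i
    proof (cases "x i = 0 \<or> y i = 0")
      case True
      have "0 \<le> X powr t * Y powr (1-t) * (t * (x i / X) + (1-t) * (y i / Y))"
        using XY assms i by (intro mult_nonneg_nonneg add_nonneg_nonneg) auto
      then show ?thesis using True assms by auto
    next
      case False
      hence p: "x i > 0" "y i > 0" using assms i by (auto simp: order.order_iff_strict)
      have "(x i / X) powr t * (y i / Y) powr (1-t) \<le> t * (x i / X) + (1-t) * (y i / Y)"
        using assms p XY by (intro Youngs_inequality_0) auto
      moreover have "x i powr t * y i powr (1-t) = X powr t * Y powr (1-t) * ((x i / X) powr t * (y i / Y) powr (1-t))"
        using p XY by (simp add: powr_divide)
      ultimately show ?thesis using XY by (simp add: mult_left_mono)
    qed
    hence "(\<Sum>i\<in>S. x i powr t * y i powr (1-t)) \<le> (\<Sum>i\<in>S. X powr t * Y powr (1-t) * (t * (x i / X) + (1-t) * (y i / Y)))"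
      by (rule sum_mono)
    also have "\<dots> = X powr t * Y powr (1-t) * (t * (X / X) + (1-t) * (Y / Y))"
      by (simp add: sum_distrib_left sum_distrib_right sum.distrib sum_divide_distrib[symmetric] X_def Y_def
          flip: sum_distrib_left)
    also have "\<dots> = X powr t * Y powr (1-t)" using XY by simp
    finally show ?thesis unfolding X_def Y_def .
  qed
qed

lemma finite_div_tuples:
  assumes "a \<in> pos_vecs k"
  shows "finite (div_tuples a)"
proof -
  define M where "M = prod_list a"
  have Mpos: "M > 0" using assms unfolding M_def pos_vecs_def using prod_list_zero_iff[of a] by (auto simp: gr0_conv_Suc[symmetric])
  have "div_tuples a \<subseteq> {d. set d \<subseteq> {..M} \<and> length d = length a}"
  proof
    fix d assume d: "d \<in> div_tuples a"
    have len: "length d = length a" using d by (auto simp: div_tuples_def pos_vecs_def)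
    have "set d \<subseteq> {..M}"
    proof
      fix x assume x: "x \<in> set d"
      then obtain i where i: "i < length d" "d ! i = x" by (auto simp: in_set_conv_nth)
      have "x dvd prod_list (take (Suc i) d)"
        using i by (intro prod_list_dvd) (auto simp: in_set_conv_nth nth_take intro!: exI[of _ i])
      also have "\<dots> dvd prod_list (take (Suc i) a)" using d i len by (auto simp: div_tuples_def)
      also have "\<dots> dvd M" unfolding M_def
        by (metis append_take_drop_id dvd_triv_left prod_list.append)
      finally show "x \<in> {..M}" using Mpos by (auto dest: dvd_imp_le)
    qed
    thus "d \<in> {d. set d \<subseteq> {..M} \<and> length d = length a}" using len by simp
  qed
  moreover have "finite {d. set d \<subseteq> {..M} \<and> length d = length a}"
    by (rule finite_lists_length_eq) auto
  ultimately show ?thesis by (rule finite_subset)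
qed

lemma div_tuplesD:
  assumes "d \<in> div_tuples a"
  shows "length d = length a" "\<And>v. v \<in> set d \<Longrightarrow> 0 < v"
  using assms by (auto simp: div_tuples_def pos_vecs_def)

lemma box_close:
  assumes "x \<in> box d" "x \<in> box d'" "length d = k" "length d' = k"
    "\<And>v. v\<in>set d \<Longrightarrow> 0<v" "\<And>v. v\<in>set d' \<Longrightarrow> 0<v" "i<k"
  shows "\<bar>ln (real (d'!i) / real (d!i))\<bar> < ln 2"
proof -
  have p: "real (d!i) > 0" "real (d'!i) > 0" using assms(3-7) nth_mem by auto
  have m1: "x i \<in> {ln (real (d ! i) / 2) ..< ln (real (d ! i))}"
    using assms(1,3,7) unfolding box_def by (simp add: PiE_iff)
  have m2: "x i \<in> {ln (real (d' ! i) / 2) ..< ln (real (d' ! i))}"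
    using assms(2,4,7) unfolding box_def by (simp add: PiE_iff)
  have e1: "ln (real (d ! i) / 2) = ln (real (d!i)) - ln 2" using p(1) by (simp add: ln_div)
  have e2: "ln (real (d' ! i) / 2) = ln (real (d'!i)) - ln 2" using p(2) by (simp add: ln_div)
  have e3: "ln (real (d'!i) / real (d!i)) = ln (real (d'!i)) - ln (real (d!i))" using p by (simp add: ln_div)
  show ?thesis unfolding e3 abs_less_iff using m1 m2 unfolding e1 e2 atLeastLessThan_iff by linarith
qed

definition Ncnt :: "nat list \<Rightarrow> nat list \<Rightarrow> nat" where
  "Ncnt a d = card {d'\<in>div_tuples a. \<forall>i<length a. \<bar>ln (real (d' ! i) / real (d ! i))\<bar> < ln 2}"

lemma Ncnt_pos:
  assumes "a \<in> pos_vecs k" "d \<in> div_tuples a"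
  shows "Ncnt a d > 0"
proof -
  have "\<bar>ln (real (d ! i) / real (d ! i))\<bar> < ln 2" if i: "i < length a" for i
  proof -
    have "d ! i \<in> set d" using i div_tuplesD(1)[OF assms(2)] by simp
    hence "real (d ! i) > 0" using div_tuplesD(2)[OF assms(2)] by simp
    hence "real (d ! i) / real (d ! i) = 1" by simp
    thus ?thesis using ln_gt_zero[of "2::real"] by simp
  qed
  hence "d \<in> {d'\<in>div_tuples a. \<forall>i<length a. \<bar>ln (real (d' ! i) / real (d ! i))\<bar> < ln 2}"
    using assms(2) by blast
  moreover have "finite {d'\<in>div_tuples a. \<forall>i<length a. \<bar>ln (real (d' ! i) / real (d ! i))\<bar> < ln 2}"
    using finite_div_tuples[OF assms(1)] by simp
  ultimately show ?thesis unfolding Ncnt_def using card_gt_0_iff by blast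
qed

lemma pointwise:
  assumes a: "a \<in> pos_vecs k"
  shows "(\<Sum>d\<in>div_tuples a. indicator (box d) x / real (Ncnt a d)) \<le> (indicator (\<Union>d\<in>div_tuples a. box d) x :: real)"
proof -
  define D where "D = div_tuples a"
  have fin: "finite D" using finite_div_tuples[OF a] D_def by simp
  define F where "F = {d\<in>D. x \<in> box d}"
  have finF: "finite F" using fin F_def by simp
  have "(\<Sum>d\<in>D. indicator (box d) x / real (Ncnt a d)) = (\<Sum>d\<in>F. 1 / real (Ncnt a d))"
    unfolding F_def using fin by (intro sum.mono_neutral_cong_right) (auto simp: indicator_def)
  also have "\<dots> \<le> (\<Sum>d\<in>F. 1 / real (card F))"
  proof (rule sum_mono)
    fix d assume d: "d \<in> F"
    have dD: "d \<in> D" using d F_def by simp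
    have "F \<subseteq> {d'\<in>div_tuples a. \<forall>i<length a. \<bar>ln (real (d' ! i) / real (d ! i))\<bar> < ln 2}"
    proof
      fix d' assume d': "d' \<in> F"
      have "d' \<in> D" "x \<in> box d'" "x \<in> box d" using d d' F_def by auto
      hence "\<forall>i<length a. \<bar>ln (real (d' ! i) / real (d ! i))\<bar> < ln 2"
        using box_close[of x d d' "length a"] div_tuplesD[of d a] div_tuplesD[of d' a] dD D_def by blast
      thus "d' \<in> {d'\<in>div_tuples a. \<forall>i<length a. \<bar>ln (real (d' ! i) / real (d ! i))\<bar> < ln 2}"
        using \<open>d' \<in> D\<close> D_def by blast
    qed
    hence "card F \<le> Ncnt a d" unfolding Ncnt_def
      using finite_div_tuples[OF a] by (intro card_mono) auto
    moreover have "card F > 0" using d finF card_gt_0_iff by blast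
    ultimately show "1 / real (Ncnt a d) \<le> 1 / real (card F)"
      by (intro divide_left_mono) auto
  qed
  also have "\<dots> = (if F = {} then 0 else 1)" using finF by auto
  also have "\<dots> = indicator (\<Union>d\<in>D. box d) x" unfolding F_def indicator_def by auto
  finally show ?thesis unfolding D_def .
qed

lemma meas_bound:
  assumes a: "a \<in> pos_vecs k"
  shows "(\<Sum>d\<in>div_tuples a. ln 2 ^ k / real (Ncnt a d)) \<le> Lmeas a"
proof -
  define D where "D = div_tuples a"
  have fin: "finite D" using finite_div_tuples[OF a] D_def by simp
  have len: "length a = k" using a by (simp add: pos_vecs_def)
  define M where "M = PiM {..<k} (\<lambda>_. lborel :: real measure)"
  interpret product_sigma_finite "\<lambda>_. lborel :: real measure"
    by standard
  have ld: "length d = k" if "d \<in> D" for d using div_tuplesD[of d a] that len D_def by auto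
  have bs: "box d \<in> sets M" if "d \<in> D" for d
    unfolding M_def box_def ld[OF that]
    by (intro sets_PiM_I_finite) auto
  have bm: "emeasure M (box d) = ennreal (ln 2 ^ k)" if "d \<in> D" for d
  proof -
    have "emeasure M (box d) = (\<Prod>i\<in>{..<k}. emeasure lborel {ln (real (d ! i) / 2) ..< ln (real (d ! i))})"
      unfolding M_def box_def ld[OF that]
      by (intro emeasure_PiM) auto
    also have "\<dots> = (\<Prod>i\<in>{..<k}. ennreal (ln 2))"
    proof (rule prod.cong)
      fix i assume i: "i \<in> {..<k}"
      have "real (d ! i) > 0" using div_tuplesD[of d a] that len i D_def by auto
      hence eq: "ln (real (d ! i)) - ln (real (d ! i) / 2) = ln 2" by (simp add: ln_div)
      have le: "ln (real (d ! i) / 2) \<le> ln (real (d ! i))" using eq ln_gt_zero[of "2::real"] by linarith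
      show "emeasure lborel {ln (real (d ! i) / 2) ..< ln (real (d ! i))} = ennreal (ln 2)"
        using emeasure_lborel_Ico[OF le] eq by simp
    qed simp
    also have "\<dots> = ennreal (ln 2 ^ k)" by (simp add: prod_ennreal ennreal_power)
    finally show ?thesis .
  qed
  have Us: "(\<Union>d\<in>D. box d) \<in> sets M" by (rule sets.finite_UN[OF fin]) (rule bs)
  have "emeasure M (\<Union>d\<in>D. box d) \<le> (\<Sum>d\<in>D. emeasure M (box d))"
    by (rule emeasure_subadditive_finite[OF fin]) (use bs in blast)
  also have "\<dots> = (\<Sum>d\<in>D. ennreal (ln 2 ^ k))" using bm by (intro sum.cong) auto
  also have "\<dots> = ennreal (\<Sum>d\<in>D. ln 2 ^ k)" by (rule sum_ennreal) auto
  also have "\<dots> < \<infinity>" by (metis ennreal_less_top infinity_ennreal_def)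
  finally have Uf: "emeasure M (\<Union>d\<in>D. box d) < \<infinity>" .
  have bf: "emeasure M (box d) < \<infinity>" if "d \<in> D" for d using bm that by simp
  have sp: "box d \<inter> space M = box d" if "d \<in> D" for d using sets.sets_into_space[OF bs[OF that]] by (rule Int_absorb2)
  have spU: "(\<Union>d\<in>D. box d) \<inter> space M = (\<Union>d\<in>D. box d)" using sets.sets_into_space[OF Us] by (rule Int_absorb2)
  have intb: "integrable M (\<lambda>x. indicator (box d) x / real (Ncnt a d))" if "d \<in> D" for d
    by (intro integrable_divide_zero integrable_real_indicator bs[OF that] bf[OF that])
  have intU: "integrable M (indicator (\<Union>d\<in>D. box d) :: _ \<Rightarrow> real)"
    by (intro integrable_real_indicator Us Uf)
  have "(\<Sum>d\<in>D. ln 2 ^ k / real (Ncnt a d)) = (\<Sum>d\<in>D. measure M (box d) / real (Ncnt a d))"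
  proof (rule sum.cong)
    fix d assume "d \<in> D"
    hence "measure M (box d) = ln 2 ^ k" using bm unfolding measure_def by simp
    thus "ln 2 ^ k / real (Ncnt a d) = measure M (box d) / real (Ncnt a d)" by simp
  qed simp
  also have "\<dots> = (\<Sum>d\<in>D. integral\<^sup>L M (\<lambda>x. indicator (box d) x / real (Ncnt a d)))"
  proof (rule sum.cong)
    fix d assume d: "d \<in> D"
    have "integral\<^sup>L M (\<lambda>x. indicator (box d) x / real (Ncnt a d)) = integral\<^sup>L M (indicator (box d)) / real (Ncnt a d)"
      by (rule integral_divide_zero)
    also have "\<dots> = measure M (box d) / real (Ncnt a d)" unfolding Bochner_Integration.integral_indicator sp[OF d] ..
    finally show "measure M (box d) / real (Ncnt a d) = integral\<^sup>L M (\<lambda>x. indicator (box d) x / real (Ncnt a d))" by (rule sym)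
  qed simp
  also have "\<dots> = integral\<^sup>L M (\<lambda>x. \<Sum>d\<in>D. indicator (box d) x / real (Ncnt a d))"
    by (rule Bochner_Integration.integral_sum[symmetric]) (rule intb)
  also have "\<dots> \<le> integral\<^sup>L M (indicator (\<Union>d\<in>D. box d))"
  proof (rule integral_mono)
    show "integrable M (\<lambda>x. \<Sum>d\<in>D. indicator (box d) x / real (Ncnt a d))"
      by (rule Bochner_Integration.integrable_sum) (rule intb)
    show "integrable M (indicator (\<Union>d\<in>D. box d) :: _ \<Rightarrow> real)" by (rule intU)
    fix x show "(\<Sum>d\<in>D. indicator (box d) x / real (Ncnt a d)) \<le> indicator (\<Union>d\<in>D. box d) x"
      using pointwise[OF a, of x] unfolding D_def .
  qed
  also have "\<dots> = measure M (\<Union>d\<in>D. box d)" unfolding Bochner_Integration.integral_indicator spU ..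
  also have "\<dots> = Lmeas a" unfolding Lmeas_def M_def D_def len ..
  finally show ?thesis unfolding D_def .
qed
lemma per_a:
  assumes P: "1 < P" and a: "a \<in> pos_vecs k"
  shows "real (tau a) \<le> Wfun P a powr (1/P) * (Lmeas a / ln 2 ^ k) powr (1 - 1/P)"
proof -
  define D where "D = div_tuples a"
  have fin: "finite D" using finite_div_tuples[OF a] D_def by simp
  define N where "N d = real (Ncnt a d)" for d
  have Np: "N d > 0" if "d \<in> D" for d using Ncnt_pos[OF a] that N_def D_def by auto
  have W: "Wfun P a = (\<Sum>d\<in>D. N d powr (P-1))" by (simp add: Wfun_def Ncnt_def D_def N_def)
  have l2: "ln (2::real) ^ k > 0" using ln_gt_zero[of "2::real"] by simp
  have "real (tau a) = (\<Sum>d\<in>D. (1::real))" by (simp add: tau_def D_def)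
  also have "\<dots> = (\<Sum>d\<in>D. (N d powr (P-1)) powr (1/P) * (1 / N d) powr (1 - 1/P))"
  proof (rule sum.cong)
    fix d assume d: "d \<in> D"
    have e: "(P - 1) * (1/P) = 1 - 1/P" "(P - 1) / P = 1 - 1/P" using P by (simp_all add: field_simps)
    have "(N d powr (P-1)) powr (1/P) * (1 / N d) powr (1 - 1/P)
          = N d powr (1 - 1/P) / N d powr (1 - 1/P)"
      using Np[OF d] by (simp add: powr_powr powr_divide e)
    also have "\<dots> = 1" using Np[OF d] by simp
    finally show "1 = (N d powr (P-1)) powr (1/P) * (1 / N d) powr (1 - 1/P)" by simp
  qed simp
  also have "\<dots> \<le> (\<Sum>d\<in>D. N d powr (P-1)) powr (1/P) * (\<Sum>d\<in>D. 1 / N d) powr (1 - 1/P)"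
    using fin P Np by (intro holder_sum[where t="1/P", simplified]) (auto simp: less_imp_le)
  also have "\<dots> \<le> (\<Sum>d\<in>D. N d powr (P-1)) powr (1/P) * (Lmeas a / ln 2 ^ k) powr (1 - 1/P)"
  proof (intro mult_left_mono powr_mono2)
    have "ln 2 ^ k * (\<Sum>d\<in>D. 1 / N d) = (\<Sum>d\<in>D. ln 2 ^ k / N d)" by (simp add: sum_distrib_left)
    also have "\<dots> \<le> Lmeas a" using meas_bound[OF a] unfolding D_def N_def .
    finally show "(\<Sum>d\<in>D. 1 / N d) \<le> Lmeas a / ln 2 ^ k" using l2 by (simp add: field_simps)
    show "0 \<le> (\<Sum>d\<in>D. 1 / N d)" using Np by (intro sum_nonneg) (auto simp: less_imp_le)
  qed (use P in auto)
  finally show ?thesis unfolding W .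
qed

theorem lemma6p1:
  fixes P :: real and k :: nat and A :: "nat list set"
  assumes "1 < P" and "finite A" and "A \<subseteq> pos_vecs k"
  shows "(\<Sum>a\<in>A. Wfun P a / real (prod_list a)) powr (1 / P)
         * ((1 / ln 2 ^ k) * (\<Sum>a\<in>A. Lmeas a / real (prod_list a))) powr (1 - 1 / P)
       \<ge> (\<Sum>a\<in>A. real (tau a) / real (prod_list a))"
proof -
  have l2: "ln (2::real) ^ k > 0" using ln_gt_zero[of "2::real"] by simp
  have pp: "real (prod_list a) > 0" if "a \<in> A" for a
    using that assms(3) prod_list_zero_iff[of a] by (auto simp: pos_vecs_def gr0_conv_Suc[symmetric])
  have Wn: "Wfun P a \<ge> 0" for a unfolding Wfun_def by (intro sum_nonneg) auto
  have Ln: "Lmeas a \<ge> 0" for a unfolding Lmeas_def by simp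
  have "(\<Sum>a\<in>A. real (tau a) / real (prod_list a))
     \<le> (\<Sum>a\<in>A. (Wfun P a / real (prod_list a)) powr (1/P) * ((1 / ln 2 ^ k) * (Lmeas a / real (prod_list a))) powr (1 - 1/P))"
  proof (rule sum_mono)
    fix a assume a: "a \<in> A"
    define \<pi> where "\<pi> = real (prod_list a)"
    have p: "\<pi> > 0" using pp[OF a] \<pi>_def by simp
    have "real (tau a) / \<pi> \<le> Wfun P a powr (1/P) * (Lmeas a / ln 2 ^ k) powr (1 - 1/P) / \<pi>"
      using per_a[OF assms(1), of a k] a assms(3) p by (intro divide_right_mono) auto
    also have "\<dots> = Wfun P a powr (1/P) * (Lmeas a / ln 2 ^ k) powr (1 - 1/P) / (\<pi> powr (1/P) * \<pi> powr (1 - 1/P))"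
      using p by (simp flip: powr_add)
    also have "\<dots> = (Wfun P a / \<pi>) powr (1/P) * ((1 / ln 2 ^ k) * (Lmeas a / \<pi>)) powr (1 - 1/P)"
      using p l2 Wn Ln by (simp add: powr_divide powr_mult)
    finally show "real (tau a) / real (prod_list a) \<le> (Wfun P a / real (prod_list a)) powr (1/P) * ((1 / ln 2 ^ k) * (Lmeas a / real (prod_list a))) powr (1 - 1/P)"
      unfolding \<pi>_def .
  qed
  also have "\<dots> \<le> (\<Sum>a\<in>A. Wfun P a / real (prod_list a)) powr (1/P) * (\<Sum>a\<in>A. (1 / ln 2 ^ k) * (Lmeas a / real (prod_list a))) powr (1 - 1/P)"
    using assms(1,2) Wn Ln pp l2 by (intro holder_sum[where t="1/P", simplified]) auto
  also have "\<dots> = (\<Sum>a\<in>A. Wfun P a / real (prod_list a)) powr (1 / P)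
         * ((1 / ln 2 ^ k) * (\<Sum>a\<in>A. Lmeas a / real (prod_list a))) powr (1 - 1 / P)"
    by (simp add: sum_distrib_left)
  finally show ?thesis .
qed

end
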